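(* $$\sum_{n\ge0}\Bigl(\sum_{\sigma\in\mathfrak S_{n+1}}u^{2{\rm M}(\sigma)}v^{n-2{\rm M}(\sigma)}\alpha^{{\rm LRmin}(\sigma)-1}\beta^{{\rm RLmin}(\sigma)-1}\Bigr)\frac{t^n}{n!}=\left(\frac{\sqrt{v^2-u^2}}{\sqrt{v^2-u^2}\cosh\bigl(t\sqrt{v^2-u^2}\bigr)-v\sinh\bigl(t\sqrt{v^2-u^2}\bigr)}\right)^{\alpha+\beta}.$$
   Context: For $\sigma=\sigma_1\cdots\sigma_m\in\mathfrak S_m$: ${\rm M}(\sigma)$ is the number of $i$ with $1<i<m$ and $\sigma_{i-1}<\sigma_i>\sigma_{i+1}$; ${\rm LRmin}(\sigma)$ is the number of $i$ with $\sigma_j>\sigma_i$ for all $j<i$; ${\rm RLmin}(\sigma)$ is the number of $i$ with $\sigma_j>\sigma_i$ for all $j>i$. Identity of formal power series in $t$; powers of series with constant term $1$ are $G^c=\exp(c\log G)$. *)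

theory Defs
  imports Complex_Main "HOL-Computational_Algebra.Formal_Power_Series"
    "HOL-Combinatorics.Multiset_Permutations"
begin

text \<open>Permutations of {1..m} are represented as lists (one-line notation), 0-indexed.\<close>

definition peaks :: "nat list \<Rightarrow> nat" where
  "peaks s = card {i. 0 < i \<and> i + 1 < length s \<and> s ! (i - 1) < s ! i \<and> s ! i > s ! (i + 1)}"

definition lrmin :: "nat list \<Rightarrow> nat" where
  "lrmin s = card {i. i < length s \<and> (\<forall>j<i. s ! j > s ! i)}"

definition rlmin :: "nat list \<Rightarrow> nat" where
  "rlmin s = card {i. i < length s \<and> (\<forall>j. i < j \<and> j < length s \<longrightarrow> s ! j > s ! i)}"

definition fps_cosh :: "'a::field_char_0 \<Rightarrow> 'a fps" where
  "fps_cosh c = fps_const (1/2) * (fps_exp c + fps_exp (- c))"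

definition fps_sinh :: "'a::field_char_0 \<Rightarrow> 'a fps" where
  "fps_sinh c = fps_const (1/2) * (fps_exp c - fps_exp (- c))"

text \<open>Power of a series G with constant term 1: G^c = exp(c log G).\<close>

definition fps_powr :: "'a::field_char_0 fps \<Rightarrow> 'a \<Rightarrow> 'a fps" where
  "fps_powr G c = fps_exp 1 oo (fps_const c * (fps_ln 1 oo (G - 1)))"

end

theory Submission
  imports Defs
begin


lemma peaks_Cons:
  "peaks (x # ys) = (if 2 \<le> length ys \<and> x < ys!0 \<and> ys!1 < ys!0 then 1 else 0) + peaks ys"
proof -
  define P where "P s = {i. 0 < i \<and> i + 1 < length s \<and> s ! (i - 1) < s ! i \<and> s ! i > s ! (i + 1)}" for s :: "nat list"
  have fin: "finite (P s)" for s unfolding P_def by (rule finite_subset[of _ "{..<length s}"]) auto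
  have eq: "P (x # ys) = (if 2 \<le> length ys \<and> x < ys!0 \<and> ys!1 < ys!0 then {1} else {}) \<union> Suc ` P ys"
  proof (intro set_eqI iffI)
    fix i assume "i \<in> P (x # ys)"
    then show "i \<in> (if 2 \<le> length ys \<and> x < ys!0 \<and> ys!1 < ys!0 then {1} else {}) \<union> Suc ` P ys"
      unfolding P_def
      by (cases i; cases "i - 1") (auto simp: image_iff)
  next
    fix i assume "i \<in> (if 2 \<le> length ys \<and> x < ys!0 \<and> ys!1 < ys!0 then {1} else {}) \<union> Suc ` P ys"
    then show "i \<in> P (x # ys)" unfolding P_def
      by (auto split: if_splits simp: nth_Cons')
  qed
  have "1 \<notin> Suc ` P ys" unfolding P_def by auto
  then show ?thesis using fin[of ys] unfolding peaks_def P_def[symmetric] eq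
    by (auto simp: card_image)
qed

lemma peaks_Nil[simp]: "peaks [] = 0" and peaks_single[simp]: "peaks [a] = 0"
  by (auto simp: peaks_def)

lemma peaks_two[simp]: "peaks [a,b] = 0"
  by (simp add: peaks_Cons)

lemma peaks_Cons_eq: "(ys \<noteq> [] \<longrightarrow> (a < hd ys \<longleftrightarrow> b < hd ys)) \<Longrightarrow> peaks (a # ys) = peaks (b # ys)"
  by (cases ys) (auto simp: peaks_Cons)

lemma peaks_snoc_eq: "(xs \<noteq> [] \<longrightarrow> (a < last xs \<longleftrightarrow> b < last xs)) \<Longrightarrow> peaks (xs @ [a]) = peaks (xs @ [b])"
proof (induction xs)
  case Nil then show ?case by simp
next
  case (Cons x xs)
  show ?case
  proof (cases xs)
    case Nil then show ?thesis using Cons by (simp add: peaks_Cons)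
  next
    case (Cons y zs)
    then have IH: "peaks (xs @ [a]) = peaks (xs @ [b])" using Cons.IH Cons.prems by auto
    show ?thesis
    proof (cases zs)
      case Nil then show ?thesis using Cons Cons.prems \<open>xs = y # zs\<close> by (simp add: peaks_Cons)
    next
      case (Cons w ws)
      then show ?thesis using IH \<open>xs = y # zs\<close> by (simp add: peaks_Cons)
    qed
  qed
qed

lemma peaks_split:
  assumes "xs = [] \<or> ys = [] \<or> m < last xs \<or> m < hd ys"
  shows "peaks (xs @ [m] @ ys) = peaks (xs @ [m]) + peaks (m # ys)"
  using assms
proof (induction xs)
  case Nil then show ?case by simp
next
  case (Cons x xs)
  show ?case
  proof (cases xs)
    case Nil then show ?thesis using Cons.prems by (cases ys) (auto simp: peaks_Cons)
  next
    case (Cons y zs)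
    then have IH: "peaks (xs @ [m] @ ys) = peaks (xs @ [m]) + peaks (m # ys)"
      using Cons.IH Cons.prems by auto
    show ?thesis
      using IH \<open>xs = y # zs\<close> by (cases zs) (auto simp: peaks_Cons)
  qed
qed

lemma peaks_Cons_peak: "a < b \<Longrightarrow> c < b \<Longrightarrow> peaks (a # b # c # xs) = 1 + peaks (c # xs)"
  by (simp add: peaks_Cons)

lemma peaks_bound: "xs \<noteq> [] \<Longrightarrow> 2 * peaks xs < length xs"
proof (induction "length xs" arbitrary: xs rule: less_induct)
  case less
  show ?case
  proof (cases xs)
    case Nil then show ?thesis using less by simp
  next
    case (Cons a r)
    show ?thesis
    proof (cases r)
      case Nil then show ?thesis using Cons by simp
    next
      case (Cons b r2)
      show ?thesis
      proof (cases r2)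
        case Nil then show ?thesis using \<open>xs = a # r\<close> Cons by simp
      next
        case (Cons c r3)
        show ?thesis
        proof (cases "a < b \<and> c < b")
          case True
          have "2 * peaks (c # r3) < length (c # r3)" by (rule less) (auto simp: \<open>xs = a # r\<close> \<open>r = b # r2\<close> Cons)
          then show ?thesis using True by (simp add: \<open>xs = a # r\<close> \<open>r = b # r2\<close> Cons peaks_Cons_peak)
        next
          case False
          have "2 * peaks (b # c # r3) < length (b # c # r3)" by (rule less) (auto simp: \<open>xs = a # r\<close> \<open>r = b # r2\<close> Cons)
          have "peaks (a # b # c # r3) = peaks (b # c # r3)"
            unfolding peaks_Cons[of a "b # c # r3"] using False by simp
          then show ?thesis using \<open>2 * peaks (b # c # r3) < length (b # c # r3)\<close>
            by (simp add: \<open>xs = a # r\<close> \<open>r = b # r2\<close> Cons)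
        qed
      qed
    qed
  qed
qed

lemma lrmin_snoc: "lrmin (xs @ [y]) = lrmin xs + (if \<forall>z\<in>set xs. y < z then 1 else 0)"
proof -
  define P where "P s = {i. i < length s \<and> (\<forall>j<i. s ! j > s ! i)}" for s :: "nat list"
  have eq: "P (xs @ [y]) = P xs \<union> (if \<forall>z\<in>set xs. y < z then {length xs} else {})"
    unfolding P_def using nth_mem[of _ xs] by (auto simp: nth_append in_set_conv_nth less_Suc_eq split: if_splits)
  have fin: "finite (P xs)" unfolding P_def by auto
  have "length xs \<notin> P xs" unfolding P_def by auto
  then show ?thesis unfolding lrmin_def P_def[symmetric] eq using fin by auto
qed

lemma rlmin_Cons: "rlmin (x # xs) = rlmin xs + (if \<forall>z\<in>set xs. x < z then 1 else 0)"
proof -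
  define P where "P s = {i. i < length s \<and> (\<forall>j. i < j \<and> j < length s \<longrightarrow> s ! j > s ! i)}" for s :: "nat list"
  have eq: "P (x # xs) = Suc ` P xs \<union> (if \<forall>z\<in>set xs. x < z then {0} else {})"
  proof (intro set_eqI iffI)
    fix i assume i: "i \<in> P (x # xs)"
    show "i \<in> Suc ` P xs \<union> (if \<forall>z\<in>set xs. x < z then {0} else {})"
    proof (cases i)
      case 0
      have "\<forall>z\<in>set xs. x < z"
      proof
        fix z assume "z \<in> set xs"
        then obtain k where k: "k < length xs" "z = xs ! k" by (auto simp: in_set_conv_nth)
        then have "(x # xs) ! Suc k > (x # xs) ! 0" using i 0 unfolding P_def by auto
        then show "x < z" using k by simp
      qed
      then show ?thesis using 0 by simp
    next
      case (Suc k)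
      have "k \<in> P xs" unfolding P_def
      proof (intro CollectI conjI allI impI)
        show "k < length xs" using i Suc unfolding P_def by simp
        fix j assume "k < j \<and> j < length xs"
        then have "(x # xs) ! Suc j > (x # xs) ! Suc k" using i Suc unfolding P_def by auto
        then show "xs ! k < xs ! j" by simp
      qed
      then show ?thesis using Suc by simp
    qed
  next
    fix i assume i: "i \<in> Suc ` P xs \<union> (if \<forall>z\<in>set xs. x < z then {0} else {})"
    show "i \<in> P (x # xs)"
    proof (cases "i \<in> Suc ` P xs")
      case True
      then obtain k where k: "i = Suc k" "k \<in> P xs" by auto
      show ?thesis unfolding P_def
      proof (intro CollectI conjI allI impI)
        show "i < length (x # xs)" using k unfolding P_def by simp
        fix j assume j: "i < j \<and> j < length (x # xs)"
        then obtain j' where "j = Suc j'" by (cases j) auto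
        then show "(x # xs) ! i < (x # xs) ! j" using k j unfolding P_def by auto
      qed
    next
      case False
      then have "i = 0" "\<forall>z\<in>set xs. x < z" using i by (auto split: if_splits)
      then show ?thesis unfolding P_def
        by (auto simp: nth_Cons' split: if_splits)
    qed
  qed
  have fin: "finite (P xs)" unfolding P_def by auto
  have "0 \<notin> Suc ` P xs" by auto
  then show ?thesis unfolding rlmin_def P_def[symmetric] eq using fin by (auto simp: card_image)
qed

lemma lrmin_mid: "\<forall>z\<in>set xs. m < z \<Longrightarrow> \<forall>z\<in>set ys. m < z \<Longrightarrow> lrmin (xs @ [m] @ ys) = lrmin xs + 1"
proof (induction ys rule: rev_induct)
  case Nil then show ?case using lrmin_snoc[of xs m] by simp
next
  case (snoc y ys)
  have "\<not> (\<forall>z\<in>set (xs @ [m] @ ys). y < z)" using snoc.prems by auto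
  then show ?case using snoc lrmin_snoc[of "xs @ [m] @ ys" y] by simp
qed

lemma rlmin_mid: "\<forall>z\<in>set xs. m < z \<Longrightarrow> \<forall>z\<in>set ys. m < z \<Longrightarrow> rlmin (xs @ [m] @ ys) = rlmin ys + 1"
proof (induction xs)
  case Nil then show ?case using rlmin_Cons[of m ys] by simp
next
  case (Cons x xs)
  have "\<not> (\<forall>z\<in>set (xs @ [m] @ ys). x < z)" using Cons.prems by auto
  then show ?case using Cons rlmin_Cons[of x "xs @ [m] @ ys"] by simp
qed

lemma perm_split_decomp:
  assumes "set \<sigma> = S" "distinct \<sigma>" "m \<in> S"
  shows "\<sigma> = takeWhile (\<lambda>x. x \<noteq> m) \<sigma> @ [m] @ tl (dropWhile (\<lambda>x. x \<noteq> m) \<sigma>)"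
proof -
  have "dropWhile (\<lambda>x. x \<noteq> m) \<sigma> \<noteq> []" using assms by (simp add: dropWhile_eq_Nil_conv)
  moreover have "hd (dropWhile (\<lambda>x. x \<noteq> m) \<sigma>) = m" using assms
    by (metis (mono_tags, lifting) hd_dropWhile \<open>dropWhile _ _ \<noteq> []\<close>)
  ultimately have "dropWhile (\<lambda>x. x \<noteq> m) \<sigma> = [m] @ tl (dropWhile (\<lambda>x. x \<noteq> m) \<sigma>)"
    by (cases "dropWhile (\<lambda>x. x \<noteq> m) \<sigma>") auto
  then show ?thesis by (metis takeWhile_dropWhile_id)
qed

lemma takeWhile_app_mid: "m \<notin> set L \<Longrightarrow> takeWhile (\<lambda>x. x \<noteq> m) (L @ m # R) = L"
  by (induction L) auto

lemma dropWhile_app_mid: "m \<notin> set L \<Longrightarrow> dropWhile (\<lambda>x. x \<noteq> m) (L @ m # R) = m # R"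
  by (induction L) auto

lemma sum_perm_split:
  fixes g :: "nat list \<Rightarrow> 'b::comm_monoid_add"
  assumes fin: "finite S" and m: "m \<in> S"
  shows "(\<Sum>\<sigma>\<in>permutations_of_set S. g \<sigma>) =
    (\<Sum>T\<in>Pow (S - {m}). \<Sum>L\<in>permutations_of_set T. \<Sum>R\<in>permutations_of_set (S - {m} - T). g (L @ [m] @ R))"
proof -
  define A where "A = S - {m}"
  have finA: "finite A" using fin by (simp add: A_def)
  have "(\<Sum>T\<in>Pow A. \<Sum>L\<in>permutations_of_set T. \<Sum>R\<in>permutations_of_set (A - T). g (L @ [m] @ R))
      = (\<Sum>T\<in>Pow A. \<Sum>p\<in>permutations_of_set T \<times> permutations_of_set (A - T). g (fst p @ [m] @ snd p))"
    by (simp add: sum.cartesian_product case_prod_unfold)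
  also have "\<dots> = (\<Sum>q\<in>Sigma (Pow A) (\<lambda>T. permutations_of_set T \<times> permutations_of_set (A - T)). g (fst (snd q) @ [m] @ snd (snd q)))"
    using finA by (subst sum.Sigma) (auto simp: case_prod_unfold)
  also have "\<dots> = (\<Sum>\<sigma>\<in>permutations_of_set S. g \<sigma>)"
  proof (rule sum.reindex_bij_witness[where i = "\<lambda>\<sigma>. (set (takeWhile (\<lambda>x. x \<noteq> m) \<sigma>), takeWhile (\<lambda>x. x \<noteq> m) \<sigma>, tl (dropWhile (\<lambda>x. x \<noteq> m) \<sigma>))"
        and j = "\<lambda>q. fst (snd q) @ [m] @ snd (snd q)"])
    fix \<sigma> assume s: "\<sigma> \<in> permutations_of_set S"
    then have s1: "set \<sigma> = S" "distinct \<sigma>" by (auto simp: permutations_of_set_def)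
    note dec = perm_split_decomp[OF s1 m]
    show "fst (snd (set (takeWhile (\<lambda>x. x \<noteq> m) \<sigma>), takeWhile (\<lambda>x. x \<noteq> m) \<sigma>, tl (dropWhile (\<lambda>x. x \<noteq> m) \<sigma>))) @
          [m] @ snd (snd (set (takeWhile (\<lambda>x. x \<noteq> m) \<sigma>), takeWhile (\<lambda>x. x \<noteq> m) \<sigma>, tl (dropWhile (\<lambda>x. x \<noteq> m) \<sigma>))) = \<sigma>"
      using dec by simp
    define L where "L = takeWhile (\<lambda>x. x \<noteq> m) \<sigma>"
    define R where "R = tl (dropWhile (\<lambda>x. x \<noteq> m) \<sigma>)"
    have d: "\<sigma> = L @ [m] @ R" using dec by (simp add: L_def R_def)
    have "distinct (L @ [m] @ R)" using s1 d by simp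
    then have "set L \<subseteq> A" "set R = A - set L" "distinct L" "distinct R"
      using s1 d by (auto simp: A_def)
    then show "(set (takeWhile (\<lambda>x. x \<noteq> m) \<sigma>), takeWhile (\<lambda>x. x \<noteq> m) \<sigma>, tl (dropWhile (\<lambda>x. x \<noteq> m) \<sigma>))
          \<in> Sigma (Pow A) (\<lambda>T. permutations_of_set T \<times> permutations_of_set (A - T))"
      by (simp add: L_def[symmetric] R_def[symmetric] permutations_of_set_def)
  next
    fix q assume q: "q \<in> Sigma (Pow A) (\<lambda>T. permutations_of_set T \<times> permutations_of_set (A - T))"
    obtain T L R where qq: "q = (T, L, R)" by (cases q) auto
    have TA: "T \<subseteq> A" and L: "set L = T" "distinct L" and R: "set R = A - T" "distinct R"
      using q by (auto simp: qq permutations_of_set_def)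
    have mL: "m \<notin> set L" using L TA by (auto simp: A_def)
    show "(set (takeWhile (\<lambda>x. x \<noteq> m) (fst (snd q) @ [m] @ snd (snd q))),
           takeWhile (\<lambda>x. x \<noteq> m) (fst (snd q) @ [m] @ snd (snd q)),
           tl (dropWhile (\<lambda>x. x \<noteq> m) (fst (snd q) @ [m] @ snd (snd q)))) = q"
      using mL L by (simp add: qq takeWhile_app_mid dropWhile_app_mid)
    show "fst (snd q) @ [m] @ snd (snd q) \<in> permutations_of_set S"
      using L R TA m by (auto simp: qq permutations_of_set_def A_def)
    show "g (fst (snd q) @ [m] @ snd (snd q)) = g (fst (snd q) @ [m] @ snd (snd q))" by simp
  qed
  finally show ?thesis by (simp add: A_def)
qed

lemma sum_pow_card:
  fixes F :: "nat \<Rightarrow> 'b::comm_semiring_1"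
  assumes "finite A"
  shows "(\<Sum>T\<in>Pow A. F (card T)) = (\<Sum>k\<le>card A. of_nat (card A choose k) * F k)"
proof -
  have "(\<Sum>T\<in>Pow A. F (card T)) = (\<Sum>k\<in>{..card A}. \<Sum>T\<in>{T\<in>Pow A. card T = k}. F (card T))"
    using assms by (intro sum.group[symmetric]) (auto intro: card_mono)
  also have "\<dots> = (\<Sum>k\<le>card A. of_nat (card A choose k) * F k)"
  proof (rule sum.cong)
    fix k
    have "{T\<in>Pow A. card T = k} = {T. T \<subseteq> A \<and> card T = k}" by auto
    then have "card {T\<in>Pow A. card T = k} = card A choose k" using n_subsets[OF assms] by simp
    then show "(\<Sum>T\<in>{T\<in>Pow A. card T = k}. F (card T)) = of_nat (card A choose k) * F k"
      by (simp add: mult_of_nat_commute)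
  qed simp
  finally show ?thesis .
qed

lemma sum_split_generic:
  fixes g f h :: "nat list \<Rightarrow> complex"
  assumes fin: "finite S" and m: "m \<in> S"
    and w: "\<And>T L R. T \<subseteq> S - {m} \<Longrightarrow> L \<in> permutations_of_set T \<Longrightarrow> R \<in> permutations_of_set (S - {m} - T)
            \<Longrightarrow> g (L @ [m] @ R) = c * f L * h R"
    and sf: "\<And>T. T \<subseteq> S - {m} \<Longrightarrow> (\<Sum>L\<in>permutations_of_set T. f L) = F (card T)"
    and sh: "\<And>T. T \<subseteq> S - {m} \<Longrightarrow> (\<Sum>L\<in>permutations_of_set T. h L) = H (card T)"
  shows "(\<Sum>\<sigma>\<in>permutations_of_set S. g \<sigma>) =
     c * (\<Sum>k\<le>card (S - {m}). of_nat (card (S - {m}) choose k) * F k * H (card (S - {m}) - k))"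
proof -
  define A where "A = S - {m}"
  have finA: "finite A" using fin by (simp add: A_def)
  have "(\<Sum>\<sigma>\<in>permutations_of_set S. g \<sigma>) =
    (\<Sum>T\<in>Pow A. \<Sum>L\<in>permutations_of_set T. \<Sum>R\<in>permutations_of_set (A - T). c * f L * h R)"
    unfolding sum_perm_split[OF fin m] A_def
    using w[unfolded append_Cons append_Nil] by (intro sum.cong refl) auto
  also have "\<dots> = (\<Sum>T\<in>Pow A. c * ((\<Sum>L\<in>permutations_of_set T. f L) * (\<Sum>R\<in>permutations_of_set (A - T). h R)))"
    by (intro sum.cong refl) (simp only: sum_product, simp only: sum_distrib_left mult.assoc)
  also have "\<dots> = c * (\<Sum>T\<in>Pow A. (\<lambda>k. F k * H (card A - k)) (card T))"
  proof -
    have "(\<Sum>L\<in>permutations_of_set T. f L) * (\<Sum>R\<in>permutations_of_set (A - T). h R) = F (card T) * H (card A - card T)"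
      if "T \<in> Pow A" for T
    proof -
      have "T \<subseteq> A" "A - T \<subseteq> A" using that by auto
      moreover have "card (A - T) = card A - card T" using that finA by (simp add: card_Diff_subset finite_subset)
      ultimately show ?thesis using sf sh by (simp add: A_def)
    qed
    then show ?thesis by (simp add: sum_distrib_left)
  qed
  also have "\<dots> = c * (\<Sum>k\<le>card A. of_nat (card A choose k) * (F k * H (card A - k)))"
    using sum_pow_card[OF finA, of "\<lambda>k. F k * H (card A - k)"] by simp
  finally show ?thesis by (simp add: A_def mult.assoc)
qed

definition fH :: "complex \<Rightarrow> complex \<Rightarrow> nat list \<Rightarrow> complex" where
  "fH u v w = u ^ (2 * peaks (0 # w @ [0])) * v ^ (length w + 1 - 2 * peaks (0 # w @ [0]))"

definition fX :: "complex \<Rightarrow> complex \<Rightarrow> complex \<Rightarrow> nat list \<Rightarrow> complex" where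
  "fX u v a L = u ^ (2 * peaks (L @ [0])) * v ^ (length L - 2 * peaks (L @ [0])) * a ^ lrmin L"

definition fY :: "complex \<Rightarrow> complex \<Rightarrow> complex \<Rightarrow> nat list \<Rightarrow> complex" where
  "fY u v b R = u ^ (2 * peaks (0 # R)) * v ^ (length R - 2 * peaks (0 # R)) * b ^ rlmin R"

lemma bound1: "2 * peaks (0 # w @ [0]) \<le> length w + 1"
  using peaks_bound[of "0 # w @ [0]"] by simp
lemma bound2: "2 * peaks (L @ [0]) \<le> length L"
  using peaks_bound[of "L @ [0]"] by simp
lemma bound3: "2 * peaks (0 # R) \<le> length R"
  using peaks_bound[of "0 # R"] by simp

lemma fH_split:
  assumes L: "\<forall>z\<in>set L. m < z" and R: "\<forall>z\<in>set R. m < z" and LR: "L \<noteq> [] \<or> R \<noteq> []"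
  shows "fH u v (L @ [m] @ R) = fH u v L * fH u v R"
proof -
  have "peaks (0 # (L @ [m] @ R) @ [0]) = peaks ((0 # L) @ [m] @ (R @ [0]))" by simp
  also have "\<dots> = peaks ((0 # L) @ [m]) + peaks (m # R @ [0])"
  proof (rule peaks_split)
    show "0 # L = [] \<or> R @ [0] = [] \<or> m < last (0 # L) \<or> m < hd (R @ [0])"
      using L R LR by (cases L; cases R) auto
  qed
  also have "peaks ((0 # L) @ [m]) = peaks ((0 # L) @ [0])"
    by (rule peaks_snoc_eq) (use L in \<open>cases L rule: rev_cases, auto\<close>)
  also have "peaks (m # R @ [0]) = peaks (0 # R @ [0])"
    by (rule peaks_Cons_eq) (use R in \<open>cases R, auto\<close>)
  finally have p: "peaks (0 # (L @ [m] @ R) @ [0]) = peaks (0 # L @ [0]) + peaks (0 # R @ [0])" by simp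
  have e: "length (L @ [m] @ R) + 1 - 2 * peaks (0 # (L @ [m] @ R) @ [0]) =
      (length L + 1 - 2 * peaks (0 # L @ [0])) + (length R + 1 - 2 * peaks (0 # R @ [0]))"
    using p bound1[of L] bound1[of R] by simp
  show ?thesis unfolding fH_def e power_add unfolding p by (simp add: power_add mult_ac)
qed

lemma fH_single: "0 < m \<Longrightarrow> fH u v [m] = u^2"
  by (simp add: fH_def peaks_Cons)

lemma fX_split:
  assumes L: "\<forall>z\<in>set L. m < z" and R: "\<forall>z\<in>set R. m < z"
  shows "fX u v a (L @ [m] @ R) = a * fX u v a L * fH u v R"
proof -
  have "peaks ((L @ [m] @ R) @ [0]) = peaks (L @ [m] @ (R @ [0]))" by simp
  also have "\<dots> = peaks (L @ [m]) + peaks (m # R @ [0])"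
  proof (rule peaks_split)
    show "L = [] \<or> R @ [0] = [] \<or> m < last L \<or> m < hd (R @ [0])"
      using L by (cases L rule: rev_cases) auto
  qed
  also have "peaks (L @ [m]) = peaks (L @ [0])"
    by (rule peaks_snoc_eq) (use L in \<open>cases L rule: rev_cases, auto\<close>)
  also have "peaks (m # R @ [0]) = peaks (0 # R @ [0])"
    by (rule peaks_Cons_eq) (use R in \<open>cases R, auto\<close>)
  finally have p: "peaks ((L @ [m] @ R) @ [0]) = peaks (L @ [0]) + peaks (0 # R @ [0])" by simp
  have e: "length (L @ [m] @ R) - 2 * peaks ((L @ [m] @ R) @ [0]) =
      (length L - 2 * peaks (L @ [0])) + (length R + 1 - 2 * peaks (0 # R @ [0]))"
    using p bound2[of L] bound1[of R] by simp
  have lr: "lrmin (L @ [m] @ R) = lrmin L + 1" using lrmin_mid[OF L R] .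
  show ?thesis unfolding fX_def fH_def e lr unfolding p by (simp add: power_add mult_ac)
qed

lemma fY_split:
  assumes L: "\<forall>z\<in>set L. m < z" and R: "\<forall>z\<in>set R. m < z"
  shows "fY u v b (L @ [m] @ R) = b * fH u v L * fY u v b R"
proof -
  have "peaks (0 # L @ [m] @ R) = peaks ((0 # L) @ [m] @ R)" by simp
  also have "\<dots> = peaks ((0 # L) @ [m]) + peaks (m # R)"
  proof (rule peaks_split)
    show "0 # L = [] \<or> R = [] \<or> m < last (0 # L) \<or> m < hd R"
      using R by (cases R) auto
  qed
  also have "peaks ((0 # L) @ [m]) = peaks ((0 # L) @ [0])"
    by (rule peaks_snoc_eq) (use L in \<open>cases L rule: rev_cases, auto\<close>)
  also have "peaks (m # R) = peaks (0 # R)"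
    by (rule peaks_Cons_eq) (use R in \<open>cases R, auto\<close>)
  finally have p: "peaks (0 # L @ [m] @ R) = peaks (0 # L @ [0]) + peaks (0 # R)" by simp
  have e: "length (L @ [m] @ R) - 2 * peaks (0 # L @ [m] @ R) =
      (length L + 1 - 2 * peaks (0 # L @ [0])) + (length R - 2 * peaks (0 # R))"
    using p bound1[of L] bound3[of R] by simp
  have lr: "rlmin (L @ [m] @ R) = rlmin R + 1" using rlmin_mid[OF L R] .
  show ?thesis unfolding fY_def fH_def e lr unfolding p by (simp add: power_add mult_ac)
qed

lemma main_split:
  assumes L: "\<forall>z\<in>set L. m < z" and R: "\<forall>z\<in>set R. m < z" and n: "n = length L + length R"
  shows "u ^ (2 * peaks (L @ [m] @ R)) * v ^ (n - 2 * peaks (L @ [m] @ R)) *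
     \<alpha> ^ (lrmin (L @ [m] @ R) - 1) * \<beta> ^ (rlmin (L @ [m] @ R) - 1) = fX u v \<alpha> L * fY u v \<beta> R"
proof -
  have "peaks (L @ [m] @ R) = peaks (L @ [m]) + peaks (m # R)"
  proof (rule peaks_split)
    show "L = [] \<or> R = [] \<or> m < last L \<or> m < hd R"
      using L by (cases L rule: rev_cases) auto
  qed
  also have "peaks (L @ [m]) = peaks (L @ [0])"
    by (rule peaks_snoc_eq) (use L in \<open>cases L rule: rev_cases, auto\<close>)
  also have "peaks (m # R) = peaks (0 # R)"
    by (rule peaks_Cons_eq) (use R in \<open>cases R, auto\<close>)
  finally have p: "peaks (L @ [m] @ R) = peaks (L @ [0]) + peaks (0 # R)" by simp
  have e: "n - 2 * peaks (L @ [m] @ R) = (length L - 2 * peaks (L @ [0])) + (length R - 2 * peaks (0 # R))"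
    using p bound2[of L] bound3[of R] n by simp
  show ?thesis unfolding fX_def fY_def e lrmin_mid[OF L R] rlmin_mid[OF L R] unfolding p
    by (simp add: power_add mult_ac)
qed

fun hs :: "complex \<Rightarrow> complex \<Rightarrow> nat \<Rightarrow> complex" where
  "hs u v 0 = v"
| "hs u v (Suc k) = (if k = 0 then u^2 else (\<Sum>j\<le>k. of_nat (k choose j) * hs u v j * hs u v (k - j)))"

fun xa :: "complex \<Rightarrow> complex \<Rightarrow> complex \<Rightarrow> nat \<Rightarrow> complex" where
  "xa u v a 0 = 1"
| "xa u v a (Suc k) = a * (\<Sum>j\<le>k. of_nat (k choose j) * xa u v a j * hs u v (k - j))"

fun ya :: "complex \<Rightarrow> complex \<Rightarrow> complex \<Rightarrow> nat \<Rightarrow> complex" where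
  "ya u v b 0 = 1"
| "ya u v b (Suc k) = b * (\<Sum>j\<le>k. of_nat (k choose j) * hs u v j * ya u v b (k - j))"

lemma min_facts:
  assumes "finite S" "S \<noteq> {}"
  shows "Min S \<in> S" "\<forall>z\<in>S - {Min S}. Min S < z" "card (S - {Min S}) = card S - 1"
  using assms by (auto simp: less_le)

lemma perm_set_gt:
  assumes "T \<subseteq> S - {m}" "\<forall>z\<in>S - {m}. m < z" "L \<in> permutations_of_set T"
  shows "\<forall>z\<in>set L. m < z"
  using assms by (auto simp: permutations_of_set_def)

lemma sumH: "finite S \<Longrightarrow> 0 \<notin> S \<Longrightarrow> (\<Sum>w\<in>permutations_of_set S. fH u v w) = hs u v (card S)"
proof (induction "card S" arbitrary: S rule: less_induct)
  case less
  show ?case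
  proof (cases "S = {}")
    case True then show ?thesis by (simp add: fH_def)
  next
    case False
    define m where "m = Min S"
    note mf = min_facts[OF less.prems(1) False, folded m_def]
    have m0: "0 < m" using mf(1) less.prems(2) by (cases m) auto
    show ?thesis
    proof (cases "S - {m} = {}")
      case True
      then have "S = {m}" using mf(1) by auto
      then show ?thesis using m0 by (simp add: fH_single)
    next
      case A: False
      have cS: "card S = Suc (card (S - {m}))" using mf(3) False less.prems(1) by (simp add: card_gt_0_iff)
      have cA: "card (S - {m}) \<noteq> 0" using A less.prems(1) by simp
      have IH: "(\<Sum>w\<in>permutations_of_set T. fH u v w) = hs u v (card T)" if "T \<subseteq> S - {m}" for T
      proof (rule less.hyps)
        show "card T < card S" using that cS less.prems(1) by (metis card_mono finite_Diff less_Suc_eq_le)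
        show "finite T" using that less.prems(1) by (meson finite_Diff finite_subset)
        show "0 \<notin> T" using that less.prems(2) by auto
      qed
      have "(\<Sum>w\<in>permutations_of_set S. fH u v w) =
          1 * (\<Sum>k\<le>card (S - {m}). of_nat (card (S - {m}) choose k) * hs u v k * hs u v (card (S - {m}) - k))"
      proof (rule sum_split_generic[OF less.prems(1) mf(1)])
        fix T L R assume T: "T \<subseteq> S - {m}" and L: "L \<in> permutations_of_set T" and R: "R \<in> permutations_of_set (S - {m} - T)"
        have "L \<noteq> [] \<or> R \<noteq> []" using A T L R by (auto simp: permutations_of_set_def)
        then show "fH u v (L @ [m] @ R) = 1 * fH u v L * fH u v R"
          using fH_split perm_set_gt[OF T mf(2) L] perm_set_gt[OF _ mf(2) R] by simp
      qed (use IH in auto)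
      then show ?thesis using cS cA by simp
    qed
  qed
qed

lemma sumX: "finite S \<Longrightarrow> 0 \<notin> S \<Longrightarrow> (\<Sum>w\<in>permutations_of_set S. fX u v a w) = xa u v a (card S)"
proof (induction "card S" arbitrary: S rule: less_induct)
  case less
  show ?case
  proof (cases "S = {}")
    case True then show ?thesis by (simp add: fX_def lrmin_def)
  next
    case False
    define m where "m = Min S"
    note mf = min_facts[OF less.prems(1) False, folded m_def]
    have cS: "card S = Suc (card (S - {m}))" using mf(3) False less.prems(1) by (simp add: card_gt_0_iff)
    have IH: "(\<Sum>w\<in>permutations_of_set T. fX u v a w) = xa u v a (card T)" if "T \<subseteq> S - {m}" for T
    proof (rule less.hyps)
      show "card T < card S" using that cS less.prems(1) by (metis card_mono finite_Diff less_Suc_eq_le)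
      show "finite T" using that less.prems(1) by (meson finite_Diff finite_subset)
      show "0 \<notin> T" using that less.prems(2) by auto
    qed
    have IH2: "(\<Sum>w\<in>permutations_of_set T. fH u v w) = hs u v (card T)" if "T \<subseteq> S - {m}" for T
      using that less.prems by (intro sumH) (auto intro: finite_subset)
    have "(\<Sum>w\<in>permutations_of_set S. fX u v a w) =
        a * (\<Sum>k\<le>card (S - {m}). of_nat (card (S - {m}) choose k) * xa u v a k * hs u v (card (S - {m}) - k))"
    proof (rule sum_split_generic[OF less.prems(1) mf(1)])
      fix T L R assume T: "T \<subseteq> S - {m}" and L: "L \<in> permutations_of_set T" and R: "R \<in> permutations_of_set (S - {m} - T)"
      show "fX u v a (L @ [m] @ R) = a * fX u v a L * fH u v R"
        using fX_split perm_set_gt[OF T mf(2) L] perm_set_gt[OF _ mf(2) R] by simp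
    qed (use IH IH2 in auto)
    then show ?thesis using cS by simp
  qed
qed

lemma sumY: "finite S \<Longrightarrow> 0 \<notin> S \<Longrightarrow> (\<Sum>w\<in>permutations_of_set S. fY u v b w) = ya u v b (card S)"
proof (induction "card S" arbitrary: S rule: less_induct)
  case less
  show ?case
  proof (cases "S = {}")
    case True then show ?thesis by (simp add: fY_def rlmin_def)
  next
    case False
    define m where "m = Min S"
    note mf = min_facts[OF less.prems(1) False, folded m_def]
    have cS: "card S = Suc (card (S - {m}))" using mf(3) False less.prems(1) by (simp add: card_gt_0_iff)
    have IH: "(\<Sum>w\<in>permutations_of_set T. fY u v b w) = ya u v b (card T)" if "T \<subseteq> S - {m}" for T
    proof (rule less.hyps)
      show "card T < card S" using that cS less.prems(1) by (metis card_mono finite_Diff less_Suc_eq_le)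
      show "finite T" using that less.prems(1) by (meson finite_Diff finite_subset)
      show "0 \<notin> T" using that less.prems(2) by auto
    qed
    have IH2: "(\<Sum>w\<in>permutations_of_set T. fH u v w) = hs u v (card T)" if "T \<subseteq> S - {m}" for T
      using that less.prems by (intro sumH) (auto intro: finite_subset)
    have "(\<Sum>w\<in>permutations_of_set S. fY u v b w) =
        b * (\<Sum>k\<le>card (S - {m}). of_nat (card (S - {m}) choose k) * hs u v k * ya u v b (card (S - {m}) - k))"
    proof (rule sum_split_generic[OF less.prems(1) mf(1)])
      fix T L R assume T: "T \<subseteq> S - {m}" and L: "L \<in> permutations_of_set T" and R: "R \<in> permutations_of_set (S - {m} - T)"
      show "fY u v b (L @ [m] @ R) = b * fH u v L * fY u v b R"
        using fY_split perm_set_gt[OF T mf(2) L] perm_set_gt[OF _ mf(2) R] by simp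
    qed (use IH IH2 in auto)
    then show ?thesis using cS by simp
  qed
qed

lemma sumMain:
  "(\<Sum>\<sigma>\<in>permutations_of_set {1..n+1}.
            u ^ (2 * peaks \<sigma>) * v ^ (n - 2 * peaks \<sigma>) *
            \<alpha> ^ (lrmin \<sigma> - 1) * \<beta> ^ (rlmin \<sigma> - 1))
   = (\<Sum>k\<le>n. of_nat (n choose k) * xa u v \<alpha> k * ya u v \<beta> (n - k))"
proof -
  have m: "(1::nat) \<in> {1..n+1}" by simp
  have gt: "\<forall>z\<in>{1..n+1} - {1}. (1::nat) < z" by auto
  have cA: "card ({1..n+1} - {1::nat}) = n" by simp
  have "(\<Sum>\<sigma>\<in>permutations_of_set {1..n+1}.
            u ^ (2 * peaks \<sigma>) * v ^ (n - 2 * peaks \<sigma>) *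
            \<alpha> ^ (lrmin \<sigma> - 1) * \<beta> ^ (rlmin \<sigma> - 1))
    = 1 * (\<Sum>k\<le>card ({1..n+1} - {1}). of_nat (card ({1..n+1} - {1}) choose k) * xa u v \<alpha> k * ya u v \<beta> (card ({1..n+1} - {1}) - k))"
  proof (rule sum_split_generic[OF _ m])
    fix T L R assume T: "T \<subseteq> {1..n+1} - {1}" and L: "L \<in> permutations_of_set T" and R: "R \<in> permutations_of_set ({1..n+1} - {1} - T)"
    have len: "n = length L + length R"
    proof -
      have d: "distinct L" "distinct R" "set L = T" "set R = {1..n+1} - {1} - T" using L R by (auto simp: permutations_of_set_def)
      have "length L = card T" "length R = card ({1..n+1} - {1} - T)"
        using distinct_card[OF d(1)] distinct_card[OF d(2)] d(3,4) by simp_all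
      moreover have "card ({1..n+1} - {1} - T) = n - card T" using T cA by (simp add: card_Diff_subset finite_subset)
      moreover have "card T \<le> n" using T cA by (metis card_mono finite_Diff finite_atLeastAtMost)
      ultimately show ?thesis by simp
    qed
    show "u ^ (2 * peaks (L @ [1] @ R)) * v ^ (n - 2 * peaks (L @ [1] @ R)) *
            \<alpha> ^ (lrmin (L @ [1] @ R) - 1) * \<beta> ^ (rlmin (L @ [1] @ R) - 1) = 1 * fX u v \<alpha> L * fY u v \<beta> R"
      using main_split[OF perm_set_gt[OF T gt L] perm_set_gt[OF _ gt R] len] by simp
  next
    fix T assume "T \<subseteq> {1..n+1} - {1::nat}"
    then show "(\<Sum>L\<in>permutations_of_set T. fX u v \<alpha> L) = xa u v \<alpha> (card T)"
      by (intro sumX) (auto intro: finite_subset)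
  next
    fix T assume "T \<subseteq> {1..n+1} - {1::nat}"
    then show "(\<Sum>L\<in>permutations_of_set T. fY u v \<beta> L) = ya u v \<beta> (card T)"
      by (intro sumY) (auto intro: finite_subset)
  qed simp
  then show ?thesis unfolding cA by simp
qed




unbundle fps_syntax

lemma fps_ode_unique:
  fixes A B :: "complex fps"
  assumes "fps_deriv A = \<Phi> A" "fps_deriv B = \<Phi> B" "A $ 0 = B $ 0"
    and caus: "\<And>n A B. (\<forall>k\<le>n. A $ k = B $ k) \<Longrightarrow> \<Phi> A $ n = \<Phi> B $ n"
  shows "A = B"
proof -
  have "\<forall>k\<le>n. A $ k = B $ k" for n
  proof (induction n)
    case 0 then show ?case using assms(3) by simp
  next
    case (Suc n)
    have "\<Phi> A $ n = \<Phi> B $ n" using caus[OF Suc.IH] .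
    then have "fps_deriv A $ n = fps_deriv B $ n" using assms(1,2) by simp
    then have "A $ Suc n = B $ Suc n" by (simp del: of_nat_Suc)
    then show ?case using Suc.IH le_Suc_eq by auto
  qed
  then show ?thesis by (auto simp: fps_eq_iff)
qed

lemma caus_sq: "(\<forall>k\<le>n. A $ k = B $ k) \<Longrightarrow> (A * A) $ n = (B * B) $ n"
  unfolding fps_mult_nth by (intro sum.cong) auto

lemma caus_mult: "(\<forall>k\<le>n. A $ k = B $ k) \<Longrightarrow> (P * A) $ n = (P * B) $ n"
  unfolding fps_mult_nth by (intro sum.cong) auto

lemma egf_conv:
  "Abs_fps (\<lambda>n. (\<Sum>k\<le>n. of_nat (n choose k) * a k * b (n - k)) / fact n) =
   Abs_fps (\<lambda>n. a n / fact n) * Abs_fps (\<lambda>n. b n / (fact n :: complex))"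
proof (rule fps_ext)
  fix n
  have "(\<Sum>k\<le>n. of_nat (n choose k) * a k * b (n - k)) / fact n = (\<Sum>k\<le>n. a k / fact k * (b (n - k) / fact (n - k)))"
    unfolding sum_divide_distrib
  proof (rule sum.cong)
    fix k assume "k \<in> {..n}"
    then have "k \<le> n" by simp
    then show "of_nat (n choose k) * a k * b (n - k) / fact n = a k / fact k * (b (n - k) / fact (n - k))"
      by (simp add: binomial_fact field_simps)
  qed simp
  then show "Abs_fps (\<lambda>n. (\<Sum>k\<le>n. of_nat (n choose k) * a k * b (n - k)) / fact n) $ n =
    (Abs_fps (\<lambda>n. a n / fact n) * Abs_fps (\<lambda>n. b n / fact n)) $ n"
    by (simp add: fps_mult_nth atLeast0AtMost)
qed

lemma egf_deriv: "fps_deriv (Abs_fps (\<lambda>k. c k / fact k)) = Abs_fps (\<lambda>k. c (Suc k) / (fact k :: complex))"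
  by (rule fps_ext) (simp add: field_simps del: of_nat_Suc)

definition GX where "GX u v a = Abs_fps (\<lambda>k. xa u v a k / fact k)"
definition GY where "GY u v a = Abs_fps (\<lambda>k. ya u v a k / fact k)"
definition GH where "GH u v = Abs_fps (\<lambda>k. hs u v k / fact k)"

lemma EH_deriv: "fps_deriv (GH u v) = GH u v * GH u v + fps_const (u^2 - v^2)"
proof -
  have "GH u v * GH u v = Abs_fps (\<lambda>n. (\<Sum>k\<le>n. of_nat (n choose k) * hs u v k * hs u v (n - k)) / fact n)"
    unfolding GH_def egf_conv ..
  then show ?thesis unfolding GH_def egf_deriv
    by (auto simp: fps_eq_iff power2_eq_square)
qed

lemma EX_deriv: "fps_deriv (GX u v a) = fps_const a * (GX u v a * GH u v)"
proof -
  have "GX u v a * GH u v = Abs_fps (\<lambda>n. (\<Sum>k\<le>n. of_nat (n choose k) * xa u v a k * hs u v (n - k)) / fact n)"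
    unfolding GH_def GX_def egf_conv ..
  then show ?thesis unfolding GX_def egf_deriv
    by (auto simp: fps_eq_iff)
qed

lemma EY_deriv: "fps_deriv (GY u v b) = fps_const b * (GH u v * GY u v b)"
proof -
  have "GH u v * GY u v b = Abs_fps (\<lambda>n. (\<Sum>k\<le>n. of_nat (n choose k) * hs u v k * ya u v b (n - k)) / fact n)"
    unfolding GH_def GY_def egf_conv ..
  then show ?thesis unfolding GY_def egf_deriv
    by (auto simp: fps_eq_iff)
qed

lemma cosh_deriv: "fps_deriv (fps_cosh c) = fps_const c * fps_sinh (c::complex)"
  unfolding fps_cosh_def fps_sinh_def by (simp add: algebra_simps flip: fps_const_neg)

lemma sinh_deriv: "fps_deriv (fps_sinh c) = fps_const c * fps_cosh (c::complex)"
  unfolding fps_cosh_def fps_sinh_def by (simp add: algebra_simps flip: fps_const_neg)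

lemma cosh_0: "fps_cosh c $ 0 = (1::complex)" and sinh_0: "fps_sinh c $ 0 = (0::complex)"
  unfolding fps_cosh_def fps_sinh_def by simp_all

definition Qf :: "complex \<Rightarrow> complex \<Rightarrow> complex fps" where
  "Qf s v = fps_const s * fps_cosh s - fps_const v * fps_sinh s"

definition Hq :: "complex \<Rightarrow> complex \<Rightarrow> complex fps" where
  "Hq s v = - fps_deriv (Qf s v) * inverse (Qf s v)"

lemma Qf_0: "Qf s v $ 0 = s"
  by (simp add: Qf_def cosh_0 sinh_0)

lemma Qf_d: "fps_deriv (Qf s v) = fps_const (s^2) * fps_sinh s - fps_const (v * s) * fps_cosh s"
  by (simp add: Qf_def cosh_deriv sinh_deriv power2_eq_square mult.assoc flip: fps_const_mult)

lemma Qf_dd: "fps_deriv (fps_deriv (Qf s v)) = fps_const (s^2) * Qf s v"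
  unfolding Qf_d by (simp add: Qf_def cosh_deriv sinh_deriv power2_eq_square algebra_simps flip: fps_const_mult)

lemma Hq_0: "s \<noteq> 0 \<Longrightarrow> Hq s v $ 0 = v"
proof -
  assume s: "s \<noteq> 0"
  have "fps_deriv (Qf s v) $ 0 = - v * s" unfolding Qf_d by (simp add: cosh_0 sinh_0)
  then show ?thesis unfolding Hq_def using s by (simp add: fps_mult_nth Qf_0)
qed

lemma Hq_deriv:
  assumes s: "s \<noteq> 0"
  shows "fps_deriv (Hq s v) = Hq s v * Hq s v - fps_const (s^2)"
proof -
  define Q where "Q = Qf s v"
  have Q0: "Q $ 0 \<noteq> 0" using s by (simp add: Q_def Qf_0)
  have QI: "Q * inverse Q = 1" using inverse_mult_eq_1'[OF Q0] .
  have dI: "fps_deriv (inverse Q) = - fps_deriv Q * (inverse Q)^2" using fps_inverse_deriv[OF Q0] .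
  have dd: "fps_deriv (fps_deriv Q) = fps_const (s^2) * Q" using Qf_dd[of s v] by (simp add: Q_def)
  have "fps_deriv (Hq s v) = - fps_deriv Q * fps_deriv (inverse Q) + - fps_deriv (fps_deriv Q) * inverse Q"
    unfolding Hq_def Q_def[symmetric] by (simp only: fps_deriv_mult fps_deriv_neg)
  also have "\<dots> = - fps_const (s^2) * (Q * inverse Q) + (fps_deriv Q * inverse Q) * (fps_deriv Q * inverse Q)"
    unfolding dI dd by algebra
  also have "\<dots> = Hq s v * Hq s v - fps_const (s^2)"
    unfolding QI Hq_def Q_def[symmetric] by (simp add: algebra_simps)
  finally show ?thesis .
qed

lemma GH_eq:
  assumes s: "s \<noteq> 0" and e: "s^2 = v^2 - u^2"
  shows "GH u v = Hq s v"
proof (rule fps_ode_unique[where \<Phi> = "\<lambda>A. A * A - fps_const (s^2)"])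
  show "fps_deriv (GH u v) = GH u v * GH u v - fps_const (s^2)"
    unfolding EH_deriv e diff_conv_add_uminus fps_const_neg by simp
  show "fps_deriv (Hq s v) = Hq s v * Hq s v - fps_const (s^2)" using Hq_deriv[OF s] .
  show "GH u v $ 0 = Hq s v $ 0" using Hq_0[OF s] by (simp add: GH_def)
next
  fix n and A B :: "complex fps"
  assume "\<forall>k\<le>n. A $ k = B $ k"
  then show "(A * A - fps_const (s^2)) $ n = (B * B - fps_const (s^2)) $ n"
    using caus_sq by simp
qed

lemma powr_deriv:
  assumes s: "s \<noteq> 0"
  shows "fps_deriv (fps_powr (fps_const s / Qf s v) c) = fps_const c * Hq s v * fps_powr (fps_const s / Qf s v) c"
    and "fps_powr (fps_const s / Qf s v) c $ 0 = 1"
proof -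
  define Q where "Q = Qf s v"
  have Q0: "Q $ 0 \<noteq> 0" using s by (simp add: Q_def Qf_0)
  have QI: "Q * inverse Q = 1" using inverse_mult_eq_1'[OF Q0] .
  define G where "G = fps_const s * inverse Q"
  have G: "fps_const s / Q = G" unfolding G_def using Q0 by (simp add: fps_divide_unit)
  have G0: "G $ 0 = 1" using s by (simp add: G_def Q_def Qf_0)
  have G10: "(G - 1) $ 0 = 0" using G0 by simp
  have GI: "inverse G = fps_const (1/s) * Q"
  proof (rule fps_inverse_unique)
    have c1: "fps_const s * fps_const (1/s) = 1" using s by simp
    have "G * (fps_const (1 / s) * Q) = (fps_const s * fps_const (1/s)) * (Q * inverse Q)"
      unfolding G_def by (simp only: mult_ac)
    then show "G * (fps_const (1 / s) * Q) = 1" by (simp only: c1 QI mult_1_left)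
  qed
  have dG: "fps_deriv G = fps_const s * (- fps_deriv Q * (inverse Q)^2)"
    unfolding G_def using fps_inverse_deriv[OF Q0] by simp
  define Lg where "Lg = fps_ln 1 oo (G - 1)"
  have XG: "(1 + fps_X) oo (G - 1) = G"
    using G10 by (simp add: fps_compose_add_distrib)
  have "fps_deriv Lg = (fps_deriv (fps_ln 1) oo (G - 1)) * fps_deriv G"
    unfolding Lg_def using fps_compose_deriv[OF G10] by simp
  also have "fps_deriv (fps_ln 1) oo (G - 1) = inverse G"
    unfolding fps_ln_deriv using fps_inverse_compose[OF G10, of "1 + fps_X"] XG by simp
  finally have dL: "fps_deriv Lg = Hq s v"
  proof -
    assume "fps_deriv Lg = inverse G * fps_deriv G"
    also have "\<dots> = (fps_const (1/s) * fps_const s) * (- fps_deriv Q * inverse Q) * (Q * inverse Q)"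
      unfolding GI dG power2_eq_square by algebra
    also have "fps_const (1/s) * fps_const s = 1" using s by simp
    also have "1 * (- fps_deriv Q * inverse Q) * (Q * inverse Q) = Hq s v" unfolding QI by (simp add: Hq_def Q_def)
    finally show ?thesis .
  qed
  have L0: "(fps_const c * Lg) $ 0 = 0" by (simp add: Lg_def fps_ln_def)
  have P: "fps_powr (fps_const s / Qf s v) c = fps_exp 1 oo (fps_const c * Lg)"
    unfolding fps_powr_def Lg_def G[unfolded Q_def] ..
  show "fps_deriv (fps_powr (fps_const s / Qf s v) c) = fps_const c * Hq s v * fps_powr (fps_const s / Qf s v) c"
    unfolding P fps_compose_deriv[OF L0] using dL by (simp add: algebra_simps)
  show "fps_powr (fps_const s / Qf s v) c $ 0 = 1" unfolding P by simp
qed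

theorem theorem4p5:
  fixes u v \<alpha> \<beta> s :: complex
  assumes "s\<^sup>2 = v\<^sup>2 - u\<^sup>2" and "s \<noteq> 0"
  shows "Abs_fps (\<lambda>n. (\<Sum>\<sigma>\<in>permutations_of_set {1..n+1}.
            u ^ (2 * peaks \<sigma>) * v ^ (n - 2 * peaks \<sigma>) *
            \<alpha> ^ (lrmin \<sigma> - 1) * \<beta> ^ (rlmin \<sigma> - 1)) / of_nat (fact n))
       = fps_powr (fps_const s / (fps_const s * fps_cosh s - fps_const v * fps_sinh s)) (\<alpha> + \<beta>)"
proof -
  have L: "Abs_fps (\<lambda>n. (\<Sum>\<sigma>\<in>permutations_of_set {1..n+1}.
            u ^ (2 * peaks \<sigma>) * v ^ (n - 2 * peaks \<sigma>) *
            \<alpha> ^ (lrmin \<sigma> - 1) * \<beta> ^ (rlmin \<sigma> - 1)) / of_nat (fact n)) = GX u v \<alpha> * GY u v \<beta>"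
    unfolding sumMain of_nat_fact GX_def GY_def egf_conv ..
  have H: "GH u v = Hq s v" using GH_eq[OF assms(2) assms(1)] .
  have Q: "fps_const s * fps_cosh s - fps_const v * fps_sinh s = Qf s v" by (simp add: Qf_def)
  show ?thesis unfolding L Q
  proof (rule fps_ode_unique[where \<Phi> = "\<lambda>A. fps_const (\<alpha> + \<beta>) * Hq s v * A"])
    show "fps_deriv (GX u v \<alpha> * GY u v \<beta>) = fps_const (\<alpha> + \<beta>) * Hq s v * (GX u v \<alpha> * GY u v \<beta>)"
      unfolding fps_deriv_mult EX_deriv EY_deriv H by (simp add: algebra_simps flip: fps_const_add)
    show "fps_deriv (fps_powr (fps_const s / Qf s v) (\<alpha> + \<beta>)) = fps_const (\<alpha> + \<beta>) * Hq s v * fps_powr (fps_const s / Qf s v) (\<alpha> + \<beta>)"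
      using powr_deriv(1)[OF assms(2)] .
    show "(GX u v \<alpha> * GY u v \<beta>) $ 0 = fps_powr (fps_const s / Qf s v) (\<alpha> + \<beta>) $ 0"
      using powr_deriv(2)[OF assms(2)] by (simp add: GX_def GY_def)
  next
    fix n and A B :: "complex fps"
    assume "\<forall>k\<le>n. A $ k = B $ k"
    then show "(fps_const (\<alpha> + \<beta>) * Hq s v * A) $ n = (fps_const (\<alpha> + \<beta>) * Hq s v * B) $ n"
      by (rule caus_mult)
  qed
qed


end
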